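(* Let $(P,Q)$ be a quasi-projection pair on a Hilbert $C^*$-module $H$. Then $$\|(I-P)Q\|=\|Q(I-P)\|,\qquad \|(I-Q)P\|=\|P(I-Q)\|,$$ and $$\big\|(P-Q)^2\big\|\le\max\big\{\|(I-P)Q\|,\|(I-Q)P\|\big\}\le\|P-Q\|.$$
   Context: $H$ is a Hilbert module over a $C^*$-algebra, $\mathcal{L}(H)$ the adjointable operators. A quasi-projection pair is $(P,Q)$ with $P\in\mathcal{L}(H)$ a projection (self-adjoint idempotent), $Q\in\mathcal{L}(H)$ an idempotent, and $Q^*=(2P-I)Q(2P-I)$. *)

theory Defs
  imports Complex_Main
begin

text \<open>Unital C*-algebras (complex Banach *-algebras with unit satisfying the C*-identity).
  The algebra of adjointable operators on a Hilbert C*-module is such an algebra, and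
  every unital C*-algebra A arises this way (A = L(A_A)).\<close>

class cstar_algebra = banach + real_normed_algebra_1 +
  fixes scaleC :: "complex \<Rightarrow> 'a \<Rightarrow> 'a"
    and adj :: "'a \<Rightarrow> 'a"
  assumes scaleC_add_left: "scaleC (a + b) x = scaleC a x + scaleC b x"
    and scaleC_add_right: "scaleC a (x + y) = scaleC a x + scaleC a y"
    and scaleC_scaleC: "scaleC a (scaleC b x) = scaleC (a * b) x"
    and scaleC_one: "scaleC 1 x = x"
    and scaleR_scaleC: "scaleR r x = scaleC (complex_of_real r) x"
    and scaleC_mult_left: "scaleC a (x * y) = scaleC a x * y"
    and scaleC_mult_right: "scaleC a (x * y) = x * scaleC a y"
    and norm_scaleC: "norm (scaleC a x) = cmod a * norm x"
    and adj_adj: "adj (adj x) = x"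
    and adj_add: "adj (x + y) = adj x + adj y"
    and adj_mult: "adj (x * y) = adj y * adj x"
    and adj_scaleC: "adj (scaleC a x) = scaleC (cnj a) (adj x)"
    and cstar_identity: "norm (adj x * x) = (norm x)\<^sup>2"

definition projection :: "'a::cstar_algebra \<Rightarrow> bool" where
  "projection P \<longleftrightarrow> adj P = P \<and> P * P = P"

definition idempotent :: "'a::cstar_algebra \<Rightarrow> bool" where
  "idempotent Q \<longleftrightarrow> Q * Q = Q"

definition quasi_projection_pair :: "'a::cstar_algebra \<Rightarrow> 'a \<Rightarrow> bool" where
  "quasi_projection_pair P Q \<longleftrightarrow> projection P \<and> idempotent Q \<and>
     adj Q = (2 * P - 1) * Q * (2 * P - 1)"

end

theory Submission imports Defs begin

lemma adj_zero: "adj (0::'a::cstar_algebra) = 0"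
proof -
  have "adj (0::'a) = adj (0+0)" by simp
  also have "\<dots> = adj 0 + adj 0" by (rule adj_add)
  finally show ?thesis by simp
qed

lemma adj_minus: "adj (- x::'a::cstar_algebra) = - adj x"
proof -
  have "adj (- x) + adj x = 0" by (metis adj_add adj_zero add.left_inverse)
  then show ?thesis by (simp add: eq_neg_iff_add_eq_0)
qed

lemma adj_diff: "adj (x - y::'a::cstar_algebra) = adj x - adj y"
  by (metis adj_add adj_minus diff_conv_add_uminus)

lemma adj_one: "adj (1::'a::cstar_algebra) = 1"
proof -
  have "adj (adj 1 * 1) = adj 1 * adj (adj (1::'a))" by (rule adj_mult)
  then show ?thesis by (simp add: adj_adj)
qed

lemma adj_two: "adj (2::'a::cstar_algebra) = 2"
  by (metis adj_add adj_one one_add_one)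

lemma adj_power: "adj (x ^ n::'a::cstar_algebra) = (adj x) ^ n"
proof (induction n)
  case 0 then show ?case by (simp add: adj_one)
next
  case (Suc n)
  have "adj (x ^ Suc n) = adj (x^n * x)" by (simp only: power_Suc2)
  also have "\<dots> = adj x * (adj x)^n" by (simp add: adj_mult Suc)
  finally show ?case by simp
qed

lemma norm_adj_le: "norm (x::'a::cstar_algebra) \<le> norm (adj x)"
proof (cases "x = 0")
  case True then show ?thesis by simp
next
  case False
  have "(norm x)^2 = norm (adj x * x)" by (simp add: cstar_identity)
  also have "\<dots> \<le> norm (adj x) * norm x" by (rule norm_mult_ineq)
  finally have "norm x * norm x \<le> norm (adj x) * norm x" by (simp add: power2_eq_square)
  then show ?thesis using False by simp
qed

lemma norm_adj: "norm (adj x) = norm (x::'a::cstar_algebra)"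
  by (metis antisym norm_adj_le adj_adj)

lemma norm_selfadj_pow: assumes "adj T = (T::'a::cstar_algebra)"
  shows "norm (T ^ (2^k)) = norm T ^ (2^k)"
proof (induction k)
  case 0 then show ?case by simp
next
  case (Suc k)
  have "T ^ (2 ^ Suc k) = adj (T^(2^k)) * T^(2^k)"
    by (simp add: adj_power assms power_add[symmetric] mult_2)
  then have "norm (T ^ (2 ^ Suc k)) = (norm (T^(2^k)))^2" by (simp add: cstar_identity)
  then show ?case by (simp add: Suc power_mult[symmetric] mult.commute)
qed

lemma proj_norm_le1: assumes "adj P = P" "P * P = (P::'a::cstar_algebra)"
  shows "norm P \<le> 1"
proof -
  have "(norm P)^2 = norm P" by (metis assms cstar_identity)
  then show ?thesis by (metis dual_order.refl le_numeral_extra(1) power2_eq_square mult_cancel_left1 norm_ge_zero)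
qed

lemma pow_bound: fixes x y :: real
  assumes "x \<ge> 0" "y \<ge> 0" "\<And>k. x^(2^k) \<le> 2 * y^(2^k)"
  shows "x \<le> y"
proof (rule ccontr)
  assume "\<not> x \<le> y"
  then have xy: "y < x" by simp
  show False
  proof (cases "y = 0")
    case True
    then show False using assms(3)[of 0] xy by simp
  next
    case False
    then have yp: "y > 0" using assms by simp
    define r where "r = x / y"
    have r1: "r > 1" using xy yp by (simp add: r_def)
    obtain n :: nat where n: "1 / (r - 1) < n" using reals_Archimedean2 by blast
    have "1 + real n * (r - 1) \<le> (1 + (r - 1))^n" by (rule Bernoulli_inequality) (use r1 in simp)
    moreover have "real n * (r - 1) > 1" using n r1 by (simp add: field_simps)
    ultimately have "r ^ n > 2" by simp
    moreover have "r ^ n \<le> r ^ (2^n)" using r1 by (intro power_increasing) (auto simp: less_imp_le less_exp)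
    moreover have "r ^ (2^n) \<le> 2"
    proof -
      have "x^(2^n) \<le> 2 * y^(2^n)" by (rule assms(3))
      then show ?thesis using yp by (simp add: r_def power_divide divide_le_eq)
    qed
    ultimately show False by simp
  qed
qed

lemma norm_mult_le1_left: "norm (S::'a::cstar_algebra) \<le> 1 \<Longrightarrow> norm (S * X) \<le> norm X"
  by (metis mult_left_le_one_le norm_ge_zero norm_mult_ineq order.trans)
lemma norm_mult_le1_right: "norm (S::'a::cstar_algebra) \<le> 1 \<Longrightarrow> norm (X * S) \<le> norm X"
  by (metis mult_right_le_one_le norm_ge_zero norm_mult_ineq order.trans)

lemma orth_sum_norm:
  fixes A B :: "'a::cstar_algebra"
  assumes c1: "adj A * B = 0" and c2: "adj B * A = 0" and c3: "A * adj B = 0" and c4: "B * adj A = 0"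
  shows "norm (A + B) \<le> max (norm A) (norm B)"
proof -
  define C where "C = adj A * A"
  define D where "D = adj B * B"
  have "C * D = adj A * (A * adj B) * B" unfolding C_def D_def by (simp only: mult.assoc)
  then have CD: "C * D = 0" by (simp add: c3)
  have "D * C = adj B * (B * adj A) * A" unfolding C_def D_def by (simp only: mult.assoc)
  then have DC: "D * C = 0" by (simp add: c4)
  have sa: "adj C = C" "adj D = D" by (simp_all add: C_def D_def adj_mult adj_adj)
  have XX: "adj (A+B) * (A+B) = C + D"
    unfolding C_def D_def adj_add distrib_left distrib_right c1 c2 by simp
  have pw: "(C + D)^(Suc n) = C^(Suc n) + D^(Suc n)" for n
  proof (induction n)
    case 0 then show ?case by simp
  next
    case (Suc n)
    have a: "C * D^(Suc n) = 0" by (simp only: power_Suc mult.assoc[symmetric] CD mult_zero_left)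
    have b: "D * C^(Suc n) = 0" by (simp only: power_Suc mult.assoc[symmetric] DC mult_zero_left)
    have "(C + D)^(Suc (Suc n)) = (C + D) * (C^(Suc n) + D^(Suc n))"
      by (simp only: power_Suc[of "C+D" "Suc n"] Suc)
    also have "\<dots> = C^(Suc (Suc n)) + D^(Suc (Suc n))"
      unfolding distrib_left distrib_right a b power_Suc[of _ "Suc n"] by simp
    finally show ?case .
  qed
  let ?m = "max (norm A) (norm B)"
  have "norm (A+B) ^ (2^k) \<le> 2 * ?m ^ (2^k)" for k
  proof (cases k)
    case 0
    then show ?thesis using norm_triangle_ineq[of A B] by simp
  next
    case (Suc j)
    have e: "(2::nat)^k = 2 * 2^j" using Suc by simp
    have "norm (A+B) ^ (2^k) = (norm (A+B)^2)^(2^j)" by (simp add: e power_mult)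
    also have "\<dots> = norm (C+D) ^ (2^j)" by (simp only: XX cstar_identity[symmetric])
    also have "\<dots> = norm ((C+D)^(2^j))" using sa
      by (intro norm_selfadj_pow[symmetric]) (simp add: adj_add)
    also have "\<dots> = norm (C^(2^j) + D^(2^j))"
      using pw[of "2^j - 1"] by simp
    also have "\<dots> \<le> norm (C^(2^j)) + norm (D^(2^j))" by (rule norm_triangle_ineq)
    also have "\<dots> = norm A ^ (2^k) + norm B ^ (2^k)"
      proof -
      have "norm (C^(2^j)) = norm C ^ (2^j)" by (rule norm_selfadj_pow[OF sa(1)])
      moreover have "norm (D^(2^j)) = norm D ^ (2^j)" by (rule norm_selfadj_pow[OF sa(2)])
      moreover have "norm C = norm A ^ 2" "norm D = norm B ^ 2" by (simp_all only: C_def D_def cstar_identity)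
      ultimately show ?thesis by (simp only: e power_mult)
    qed
    also have "\<dots> \<le> ?m ^ (2^k) + ?m ^ (2^k)"
      by (intro add_mono power_mono) auto
    finally show ?thesis by simp
  qed
  moreover have m0: "0 \<le> ?m" by (simp add: le_max_iff_disj)
  ultimately show ?thesis using pow_bound[OF norm_ge_zero m0] by blast
qed

lemma unitary_norm:
  fixes S X :: "'a::cstar_algebra"
  assumes "norm S \<le> 1" "S * S = 1"
  shows "norm (S * X) = norm X" "norm (X * S) = norm X"
proof -
  have "norm X = norm (S * (S * X))" by (simp add: mult.assoc[symmetric] assms)
  also have "\<dots> \<le> norm (S * X)" by (rule norm_mult_le1_left[OF assms(1)])
  finally show "norm (S * X) = norm X" using norm_mult_le1_left[OF assms(1)] by (intro antisym)
  have "norm X = norm ((X * S) * S)" by (simp add: mult.assoc assms)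
  also have "\<dots> \<le> norm (X * S)" by (rule norm_mult_le1_right[OF assms(1)])
  finally show "norm (X * S) = norm X" using norm_mult_le1_right[OF assms(1)] by (intro antisym)
qed

theorem theorem5p13:
  fixes P Q :: "'a::cstar_algebra"
  assumes "quasi_projection_pair P Q"
  shows "norm ((1 - P) * Q) = norm (Q * (1 - P)) \<and>
         norm ((1 - Q) * P) = norm (P * (1 - Q)) \<and>
         norm ((P - Q)^2) \<le> max (norm ((1 - P) * Q)) (norm ((1 - Q) * P)) \<and>
         max (norm ((1 - P) * Q)) (norm ((1 - Q) * P)) \<le> norm (P - Q)"
proof -
  define S where "S = 2 * P - 1"
  have adjP: "adj P = P" and PP: "P * P = P" and QQ: "Q * Q = Q" and aQ: "adj Q = S * Q * S"
    using assms by (auto simp: quasi_projection_pair_def projection_def idempotent_def S_def)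
  have SS: "S * S = 1" and S1P: "S * (1 - P) = - (1 - P)" and PS: "P * S = P"
    unfolding S_def using PP by (simp_all add: algebra_simps mult_2 mult_2_right)
  have adjS: "adj S = S" unfolding S_def
    by (simp add: adj_diff adj_add adj_one adjP mult_2)
  have "(norm S)^2 = 1" by (metis SS adjS cstar_identity norm_one)
  then have nS: "norm S \<le> 1" by (auto simp: power2_eq_1_iff)
  have nP: "norm P \<le> 1" by (rule proj_norm_le1[OF adjP PP])
  have nP': "norm (1 - P) \<le> 1"
    by (rule proj_norm_le1) (simp_all add: adj_diff adj_one adjP algebra_simps PP)
  have "adj ((1 - P) * Q) = S * Q * (S * (1 - P))"
    by (simp add: adj_mult adj_diff adj_one adjP aQ mult.assoc)
  also have "\<dots> = - (S * (Q * (1 - P)))" by (simp only: S1P mult.assoc mult_minus_right)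
  finally have e1: "adj ((1 - P) * Q) = - (S * (Q * (1 - P)))" .
  have p1: "norm ((1 - P) * Q) = norm (Q * (1 - P))"
    by (metis e1 norm_adj norm_minus_cancel unitary_norm(1)[OF nS SS])
  have "adj ((1 - Q) * P) = P - P * S * Q * S"
    by (simp add: adj_mult adj_diff adj_one adjP aQ algebra_simps)
  also have "\<dots> = P * (1 - Q) * S" by (simp add: PS algebra_simps)
  finally have e2: "adj ((1 - Q) * P) = P * (1 - Q) * S" .
  have p2: "norm ((1 - Q) * P) = norm (P * (1 - Q))"
    by (metis e2 norm_adj unitary_norm(2)[OF nS SS])
  define A where "A = P * (1 - Q) * P"
  define B where "B = (1 - P) * Q * (1 - P)"
  have PP': "P * (P * x) = P * x" for x by (simp add: PP flip: mult.assoc)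
  have QQ': "Q * (Q * x) = Q * x" for x by (simp add: QQ flip: mult.assoc)
  have X: "(P - Q)^2 = A + B"
    unfolding A_def B_def power2_eq_square by (simp add: algebra_simps PP PP' QQ)
  have Z1: "P * ((1 - P) * x) = 0" for x by (simp add: algebra_simps PP PP')
  have Z2: "(1 - P) * (P * x) = 0" for x by (simp add: algebra_simps PP PP')
  have aA: "adj A = P * adj (1 - Q) * P" by (simp add: A_def adj_mult adjP mult.assoc)
  have aB: "adj B = (1 - P) * adj Q * (1 - P)"
    by (simp add: B_def adj_mult adj_diff adj_one adjP mult.assoc)
  have c1: "adj A * B = 0" by (simp add: aA B_def mult.assoc Z1)
  have c2: "adj B * A = 0" by (simp add: aB A_def mult.assoc Z2)
  have c3: "A * adj B = 0" by (simp add: aB A_def mult.assoc Z1)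
  have c4: "B * adj A = 0" by (simp add: aA B_def mult.assoc Z2)
  have nX: "norm ((P - Q)^2) \<le> max (norm A) (norm B)"
    unfolding X by (rule orth_sum_norm[OF c1 c2 c3 c4])
  have nA: "norm A \<le> norm ((1 - Q) * P)"
    unfolding A_def p2 by (rule norm_mult_le1_right[OF nP])
  have nB: "norm B \<le> norm ((1 - P) * Q)"
    unfolding B_def p1 mult.assoc by (rule norm_mult_le1_left[OF nP'])
  have p3: "norm ((P - Q)^2) \<le> max (norm ((1 - P) * Q)) (norm ((1 - Q) * P))"
    using nX nA nB by linarith
  have "(1 - P) * Q = (1 - P) * (Q - P)" by (simp add: algebra_simps PP)
  then have "norm ((1 - P) * Q) \<le> norm (Q - P)"
    using norm_mult_le1_left[OF nP'] by metis
  then have q1: "norm ((1 - P) * Q) \<le> norm (P - Q)" by (simp add: norm_minus_commute)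
  have "P * (1 - Q) = P * (P - Q)" by (simp add: algebra_simps PP)
  then have q2: "norm ((1 - Q) * P) \<le> norm (P - Q)"
    using norm_mult_le1_left[OF nP] p2 by metis
  show ?thesis using p1 p2 p3 q1 q2 by simp
qed

end
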